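(* For every formula $\phi\in\mathbf{Fm}$, the maps $[\![\phi]\!]:\mathsf{F}_{\mathbf{A}}(\mathbf{Fm})\to\mathbf{A}$ and $(\![\phi]\!):\mathsf{I}_{\mathbf{A}}(\mathbf{Fm})\to\mathbf{A}$ coincide with the maps $f\mapsto f(\phi)$ and $i\mapsto i(\phi)$, respectively.
   Context: Let $\mathbf{A}$ be a complete, frame-distributive and dually frame-distributive, commutative and associative residuated lattice with $1\to\alpha=\alpha$. Let $\mathbf{Fm}$ be the Lindenbaum–Tarski algebra of the basic normal non-distributive modal logic $\mathbf{L}$ over the language $\bot,\top,p,\wedge,\vee,\Box,\Diamond$. Let $\mathsf{F}_{\mathbf{A}}(\mathbf{Fm})$ (resp. $\mathsf{I}_{\mathbf{A}}(\mathbf{Fm})$) be the proper $\mathbf{A}$-filters $f$ ($f(\top)=1,f(\bot)=0$, $\wedge$-preserving) (resp. proper $\mathbf{A}$-ideals $i$: $i(\bot)=1,i(\top)=0$, $i(a\vee b)=i(a)\wedge i(b)$). Canonical model: $I(f,i)=\bigvee_\phi(f(\phi)\otimes i(\phi))$, $R_\Diamond(i,f)=\bigvee_\phi(f(\phi)\otimes i(\Diamond\phi))$, $R_\Box(f,i)=\bigvee_\phi(f(\Box\phi)\otimes i(\phi))$, $g^\uparrow(i)=\bigwedge_f(g(f)\to I(f,i))$, $u^\downarrow(f)=\bigwedge_i(u(i)\to I(f,i))$, and $V(p)=([\![p]\!],(\![p]\!))$ with $[\![p]\!](f)=f(p)$, $(\![p]\!)(i)=i(p)$. $V$ is extended to all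 formulas (writing $V(\phi)=([\![\phi]\!],(\![\phi]\!))$, extension and intension) by: $V(\top)=(\top^{\mathbf{A}^A},(\top^{\mathbf{A}^A})^\uparrow)$, $V(\bot)=((\top^{\mathbf{A}^X})^\downarrow,\top^{\mathbf{A}^X})$, $V(\phi\wedge\psi)=([\![\phi]\!]\wedge[\![\psi]\!],([\![\phi]\!]\wedge[\![\psi]\!])^\uparrow)$, $V(\phi\vee\psi)=(((\![\phi]\!)\wedge(\![\psi]\!))^\downarrow,(\![\phi]\!)\wedge(\![\psi]\!))$, $V(\Box\phi)=(R_\Box^{(0)}[(\![\phi]\!)],(R_\Box^{(0)}[(\![\phi]\!)])^\uparrow)$ with $R_\Box^{(0)}[u](f)=\bigwedge_i(u(i)\to R_\Box(f,i))$, and $V(\Diamond\phi)=((R_\Diamond^{(0)}[[\![\phi]\!]])^\downarrow,R_\Diamond^{(0)}[[\![\phi]\!]])$ with $R_\Diamond^{(0)}[g](i)=\bigwedge_f(g(f)\to R_\Diamond(i,f))$. *)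

theory Defs
  imports Main
begin

definition cfd_res_lattice :: "('a::complete_lattice \<Rightarrow> 'a \<Rightarrow> 'a) \<Rightarrow> ('a \<Rightarrow> 'a \<Rightarrow> 'a) \<Rightarrow> bool" where
  "cfd_res_lattice tens imp \<longleftrightarrow>
     (\<forall>a b. tens a b = tens b a) \<and>
     (\<forall>a b c. tens (tens a b) c = tens a (tens b c)) \<and>
     (\<forall>a b c. tens a b \<le> c \<longleftrightarrow> b \<le> imp a c) \<and>
     (\<forall>a. imp top a = a) \<and>
     (\<forall>(a::'a) B. inf a (Sup B) = (SUP b\<in>B. inf a b)) \<and>
     (\<forall>(a::'a) B. sup a (Inf B) = (INF b\<in>B. sup a b))"

datatype 'v fm = FBot | FTop | Var 'v | FAnd "'v fm" "'v fm" | FOr "'v fm" "'v fm"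
  | FBox "'v fm" | FDia "'v fm"

inductive derives :: "'v fm \<Rightarrow> 'v fm \<Rightarrow> bool" where
  refl: "derives \<phi> \<phi>"
| bot: "derives FBot \<phi>"
| top: "derives \<phi> FTop"
| orI1: "derives \<phi> (FOr \<phi> \<psi>)"
| orI2: "derives \<psi> (FOr \<phi> \<psi>)"
| andE1: "derives (FAnd \<phi> \<psi>) \<phi>"
| andE2: "derives (FAnd \<phi> \<psi>) \<psi>"
| boxTop: "derives FTop (FBox FTop)"
| diaBot: "derives (FDia FBot) FBot"
| boxAnd: "derives (FAnd (FBox \<phi>) (FBox \<psi>)) (FBox (FAnd \<phi> \<psi>))"
| diaOr: "derives (FDia (FOr \<phi> \<psi>)) (FOr (FDia \<phi>) (FDia \<psi>))"
| cut: "derives \<phi> \<chi> \<Longrightarrow> derives \<chi> \<psi> \<Longrightarrow> derives \<phi> \<psi>"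
| orE: "derives \<phi> \<chi> \<Longrightarrow> derives \<psi> \<chi> \<Longrightarrow> derives (FOr \<phi> \<psi>) \<chi>"
| andI: "derives \<chi> \<phi> \<Longrightarrow> derives \<chi> \<psi> \<Longrightarrow> derives \<chi> (FAnd \<phi> \<psi>)"
| boxMono: "derives \<phi> \<psi> \<Longrightarrow> derives (FBox \<phi>) (FBox \<psi>)"
| diaMono: "derives \<phi> \<psi> \<Longrightarrow> derives (FDia \<phi>) (FDia \<psi>)"

text \<open>Provable equivalence; the Lindenbaum--Tarski algebra Fm is the quotient of
  formulas by it. Maps out of Fm are represented as maps on formulas that are
  invariant under provable equivalence.\<close>

definition equiv_fm :: "'v fm \<Rightarrow> 'v fm \<Rightarrow> bool" where
  "equiv_fm \<phi> \<psi> \<longleftrightarrow> derives \<phi> \<psi> \<and> derives \<psi> \<phi>"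

definition on_Fm :: "('v fm \<Rightarrow> 'a) \<Rightarrow> bool" where
  "on_Fm h \<longleftrightarrow> (\<forall>\<phi> \<psi>. equiv_fm \<phi> \<psi> \<longrightarrow> h \<phi> = h \<psi>)"

definition A_filters :: "('v fm \<Rightarrow> 'a::complete_lattice) set" where
  "A_filters = {f. on_Fm f \<and> f FTop = top \<and> f FBot = bot \<and>
                   (\<forall>\<phi> \<psi>. f (FAnd \<phi> \<psi>) = inf (f \<phi>) (f \<psi>))}"

definition A_ideals :: "('v fm \<Rightarrow> 'a::complete_lattice) set" where
  "A_ideals = {i. on_Fm i \<and> i FBot = top \<and> i FTop = bot \<and>
                   (\<forall>\<phi> \<psi>. i (FOr \<phi> \<psi>) = inf (i \<phi>) (i \<psi>))}"

definition IncI :: "('a::complete_lattice \<Rightarrow> 'a \<Rightarrow> 'a) \<Rightarrow> ('v fm \<Rightarrow> 'a) \<Rightarrow> ('v fm \<Rightarrow> 'a) \<Rightarrow> 'a" where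
  "IncI tens f i = (SUP \<phi>. tens (f \<phi>) (i \<phi>))"

definition RDia :: "('a::complete_lattice \<Rightarrow> 'a \<Rightarrow> 'a) \<Rightarrow> ('v fm \<Rightarrow> 'a) \<Rightarrow> ('v fm \<Rightarrow> 'a) \<Rightarrow> 'a" where
  "RDia tens i f = (SUP \<phi>. tens (f \<phi>) (i (FDia \<phi>)))"

definition RBox :: "('a::complete_lattice \<Rightarrow> 'a \<Rightarrow> 'a) \<Rightarrow> ('v fm \<Rightarrow> 'a) \<Rightarrow> ('v fm \<Rightarrow> 'a) \<Rightarrow> 'a" where
  "RBox tens f i = (SUP \<phi>. tens (f (FBox \<phi>)) (i \<phi>))"

definition up :: "('a::complete_lattice \<Rightarrow> 'a \<Rightarrow> 'a) \<Rightarrow> ('a \<Rightarrow> 'a \<Rightarrow> 'a)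
    \<Rightarrow> (('v fm \<Rightarrow> 'a) \<Rightarrow> 'a) \<Rightarrow> ('v fm \<Rightarrow> 'a) \<Rightarrow> 'a" where
  "up tens imp g i = (INF f\<in>A_filters. imp (g f) (IncI tens f i))"

definition down :: "('a::complete_lattice \<Rightarrow> 'a \<Rightarrow> 'a) \<Rightarrow> ('a \<Rightarrow> 'a \<Rightarrow> 'a)
    \<Rightarrow> (('v fm \<Rightarrow> 'a) \<Rightarrow> 'a) \<Rightarrow> ('v fm \<Rightarrow> 'a) \<Rightarrow> 'a" where
  "down tens imp u f = (INF i\<in>A_ideals. imp (u i) (IncI tens f i))"

definition RBox0 :: "('a::complete_lattice \<Rightarrow> 'a \<Rightarrow> 'a) \<Rightarrow> ('a \<Rightarrow> 'a \<Rightarrow> 'a)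
    \<Rightarrow> (('v fm \<Rightarrow> 'a) \<Rightarrow> 'a) \<Rightarrow> ('v fm \<Rightarrow> 'a) \<Rightarrow> 'a" where
  "RBox0 tens imp u f = (INF i\<in>A_ideals. imp (u i) (RBox tens f i))"

definition RDia0 :: "('a::complete_lattice \<Rightarrow> 'a \<Rightarrow> 'a) \<Rightarrow> ('a \<Rightarrow> 'a \<Rightarrow> 'a)
    \<Rightarrow> (('v fm \<Rightarrow> 'a) \<Rightarrow> 'a) \<Rightarrow> ('v fm \<Rightarrow> 'a) \<Rightarrow> 'a" where
  "RDia0 tens imp g i = (INF f\<in>A_filters. imp (g f) (RDia tens i f))"

text \<open>The valuation V, extended to all formulas: V phi = (extension, intension).\<close>

fun V :: "('a::complete_lattice \<Rightarrow> 'a \<Rightarrow> 'a) \<Rightarrow> ('a \<Rightarrow> 'a \<Rightarrow> 'a) \<Rightarrow> 'v fm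
    \<Rightarrow> ((('v fm \<Rightarrow> 'a) \<Rightarrow> 'a) \<times> (('v fm \<Rightarrow> 'a) \<Rightarrow> 'a))" where
  "V tens imp (Var p) = ((\<lambda>f. f (Var p)), (\<lambda>i. i (Var p)))"
| "V tens imp FTop = ((\<lambda>f. top), up tens imp (\<lambda>f. top))"
| "V tens imp FBot = (down tens imp (\<lambda>i. top), (\<lambda>i. top))"
| "V tens imp (FAnd \<phi> \<psi>) =
     (let g = (\<lambda>f. inf (fst (V tens imp \<phi>) f) (fst (V tens imp \<psi>) f)) in (g, up tens imp g))"
| "V tens imp (FOr \<phi> \<psi>) =
     (let u = (\<lambda>i. inf (snd (V tens imp \<phi>) i) (snd (V tens imp \<psi>) i)) in (down tens imp u, u))"
| "V tens imp (FBox \<phi>) =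
     (let g = RBox0 tens imp (snd (V tens imp \<phi>)) in (g, up tens imp g))"
| "V tens imp (FDia \<phi>) =
     (let u = RDia0 tens imp (fst (V tens imp \<phi>)) in (down tens imp u, u))"

end

theory Submission
  imports Defs
begin

lemma cfd_comm: "cfd_res_lattice tens imp \<Longrightarrow> tens a b = tens b a"
  unfolding cfd_res_lattice_def by blast

lemma cfd_res: "cfd_res_lattice tens imp \<Longrightarrow> tens a b \<le> c \<longleftrightarrow> b \<le> imp a c"
  unfolding cfd_res_lattice_def by blast

lemma cfd_imp_top: "cfd_res_lattice tens imp \<Longrightarrow> imp top a = a"
  unfolding cfd_res_lattice_def by blast

lemma cfd_unit: "cfd_res_lattice tens imp \<Longrightarrow> tens top b = b"
proof -
  assume c: "cfd_res_lattice tens imp"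
  have "\<And>x. tens top b \<le> x \<longleftrightarrow> b \<le> x" using cfd_res[OF c] cfd_imp_top[OF c] by simp
  then show ?thesis by (metis order.antisym order.refl)
qed

lemma cfd_bot: "cfd_res_lattice tens imp \<Longrightarrow> tens a bot = bot"
  using cfd_res[of tens imp a bot bot] by (simp add: bot_unique)

lemma cfd_unit2: "cfd_res_lattice tens imp \<Longrightarrow> tens b top = b"
  using cfd_unit cfd_comm by metis

lemma cfd_bot2: "cfd_res_lattice tens imp \<Longrightarrow> tens bot a = bot"
  using cfd_bot cfd_comm by metis

lemma filt_mono:
  assumes "f \<in> A_filters" "derives \<phi> \<psi>"
  shows "f \<phi> \<le> f \<psi>"
proof -
  have e: "equiv_fm \<phi> (FAnd \<phi> \<psi>)"
    unfolding equiv_fm_def using assms(2) by (blast intro: derives.andI derives.refl derives.andE1)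
  have "f \<phi> = f (FAnd \<phi> \<psi>)" using assms(1) e unfolding A_filters_def on_Fm_def by blast
  also have "\<dots> = inf (f \<phi>) (f \<psi>)" using assms(1) unfolding A_filters_def by blast
  finally show ?thesis by (metis inf.absorb_iff1 inf_commute)
qed

lemma ideal_anti:
  assumes "i \<in> A_ideals" "derives \<phi> \<psi>"
  shows "i \<psi> \<le> i \<phi>"
proof -
  have e: "equiv_fm \<psi> (FOr \<phi> \<psi>)"
    unfolding equiv_fm_def using assms(2) by (blast intro: derives.orE derives.refl derives.orI2)
  have "i \<psi> = i (FOr \<phi> \<psi>)" using assms(1) e unfolding A_ideals_def on_Fm_def by blast
  also have "\<dots> = inf (i \<phi>) (i \<psi>)" using assms(1) unfolding A_ideals_def by blast
  finally show ?thesis by (metis inf.absorb_iff1 inf_commute)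
qed

lemma filt_eq: "f \<in> A_filters \<Longrightarrow> equiv_fm \<phi> \<psi> \<Longrightarrow> f \<phi> = f \<psi>"
  unfolding A_filters_def on_Fm_def by blast

lemma ideal_eq: "i \<in> A_ideals \<Longrightarrow> equiv_fm \<phi> \<psi> \<Longrightarrow> i \<phi> = i \<psi>"
  unfolding A_ideals_def on_Fm_def by blast

definition pid :: "'v fm \<Rightarrow> 'v fm \<Rightarrow> 'a::complete_lattice" where
  "pid \<psi> = (\<lambda>\<chi>. if derives \<chi> \<psi> then top else bot)"

definition pfil :: "'v fm \<Rightarrow> 'v fm \<Rightarrow> 'a::complete_lattice" where
  "pfil \<psi> = (\<lambda>\<chi>. if derives \<psi> \<chi> then top else bot)"

lemma or_derives: "derives (FOr a b) \<psi> \<longleftrightarrow> derives a \<psi> \<and> derives b \<psi>"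
  by (meson derives.cut derives.orE derives.orI1 derives.orI2)

lemma and_derives: "derives \<psi> (FAnd a b) \<longleftrightarrow> derives \<psi> a \<and> derives \<psi> b"
  by (meson derives.cut derives.andI derives.andE1 derives.andE2)

lemma pid_ideal: "\<not> derives FTop \<psi> \<Longrightarrow> pid \<psi> \<in> A_ideals"
  unfolding A_ideals_def pid_def on_Fm_def equiv_fm_def
  by (auto simp: or_derives derives.bot) (meson derives.cut)+

lemma pfil_filter: "\<not> derives \<psi> FBot \<Longrightarrow> pfil \<psi> \<in> A_filters"
  unfolding A_filters_def pfil_def on_Fm_def equiv_fm_def
  by (auto simp: and_derives derives.top) (meson derives.cut)+

lemma down_prin:
  fixes tens imp :: "'a::complete_lattice \<Rightarrow> 'a \<Rightarrow> 'a" and \<psi> :: "'v fm"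
  assumes c: "cfd_res_lattice tens imp" and f: "f \<in> A_filters"
  shows "down tens imp (\<lambda>i. i \<psi>) f = f \<psi>"
proof (rule order.antisym)
  show "f \<psi> \<le> down tens imp (\<lambda>i. i \<psi>) f"
    unfolding down_def
  proof (rule INF_greatest)
    fix i :: "'v fm \<Rightarrow> 'a" assume "i \<in> A_ideals"
    have "tens (i \<psi>) (f \<psi>) \<le> IncI tens f i"
      unfolding IncI_def by (subst cfd_comm[OF c]) (rule SUP_upper, simp)
    then show "f \<psi> \<le> imp (i \<psi>) (IncI tens f i)" using cfd_res[OF c] by simp
  qed
next
  show "down tens imp (\<lambda>i. i \<psi>) f \<le> f \<psi>"
  proof (cases "derives FTop \<psi>")
    case True
    then have "equiv_fm \<psi> FTop" unfolding equiv_fm_def by (simp add: derives.top derives.bot)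
    then have "f \<psi> = top" using filt_eq[OF f] f unfolding A_filters_def by simp
    then show ?thesis by simp
  next
    case False
    note p = pid_ideal[OF False]
    have "down tens imp (\<lambda>i. i \<psi>) f \<le> imp (pid \<psi> \<psi>) (IncI tens f (pid \<psi>))"
      unfolding down_def using p by (rule INF_lower)
    also have "\<dots> = IncI tens f (pid \<psi>)"
      by (simp add: pid_def derives.refl cfd_imp_top[OF c])
    also have "\<dots> \<le> f \<psi>"
      unfolding IncI_def
    proof (rule SUP_least)
      fix \<chi> :: "'v fm"
      show "tens (f \<chi>) (pid \<psi> \<chi>) \<le> f \<psi>"
        using filt_mono[OF f] by (simp add: pid_def cfd_unit2[OF c] cfd_bot[OF c])
    qed
    finally show ?thesis .
  qed
qed

lemma up_prin:
  fixes tens imp :: "'a::complete_lattice \<Rightarrow> 'a \<Rightarrow> 'a" and \<psi> :: "'v fm"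
  assumes c: "cfd_res_lattice tens imp" and i: "i \<in> A_ideals"
  shows "up tens imp (\<lambda>f. f \<psi>) i = i \<psi>"
proof (rule order.antisym)
  show "i \<psi> \<le> up tens imp (\<lambda>f. f \<psi>) i"
    unfolding up_def
  proof (rule INF_greatest)
    fix f :: "'v fm \<Rightarrow> 'a" assume "f \<in> A_filters"
    have "tens (f \<psi>) (i \<psi>) \<le> IncI tens f i"
      unfolding IncI_def by (rule SUP_upper) simp
    then show "i \<psi> \<le> imp (f \<psi>) (IncI tens f i)" using cfd_res[OF c] by simp
  qed
next
  show "up tens imp (\<lambda>f. f \<psi>) i \<le> i \<psi>"
  proof (cases "derives \<psi> FBot")
    case True
    then have "equiv_fm \<psi> FBot" unfolding equiv_fm_def by (simp add: derives.top derives.bot)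
    then have "i \<psi> = top" using ideal_eq[OF i] i unfolding A_ideals_def by simp
    then show ?thesis by simp
  next
    case False
    note p = pfil_filter[OF False]
    have "up tens imp (\<lambda>f. f \<psi>) i \<le> imp (pfil \<psi> \<psi>) (IncI tens (pfil \<psi>) i)"
      unfolding up_def using p by (rule INF_lower)
    also have "\<dots> = IncI tens (pfil \<psi>) i"
      by (simp add: pfil_def derives.refl cfd_imp_top[OF c])
    also have "\<dots> \<le> i \<psi>"
      unfolding IncI_def
    proof (rule SUP_least)
      fix \<chi> :: "'v fm"
      show "tens (pfil \<psi> \<chi>) (i \<chi>) \<le> i \<psi>"
        using ideal_anti[OF i] by (simp add: pfil_def cfd_unit[OF c] cfd_bot2[OF c])
    qed
    finally show ?thesis .
  qed
qed

lemma box_prin: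
  fixes tens imp :: "'a::complete_lattice \<Rightarrow> 'a \<Rightarrow> 'a" and \<psi> :: "'v fm"
  assumes c: "cfd_res_lattice tens imp" and f: "f \<in> A_filters"
  shows "RBox0 tens imp (\<lambda>i. i \<psi>) f = f (FBox \<psi>)"
proof (rule order.antisym)
  show "f (FBox \<psi>) \<le> RBox0 tens imp (\<lambda>i. i \<psi>) f"
    unfolding RBox0_def
  proof (rule INF_greatest)
    fix i :: "'v fm \<Rightarrow> 'a" assume "i \<in> A_ideals"
    have "tens (i \<psi>) (f (FBox \<psi>)) \<le> RBox tens f i"
      unfolding RBox_def by (subst cfd_comm[OF c]) (rule SUP_upper, simp)
    then show "f (FBox \<psi>) \<le> imp (i \<psi>) (RBox tens f i)" using cfd_res[OF c] by simp
  qed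
next
  show "RBox0 tens imp (\<lambda>i. i \<psi>) f \<le> f (FBox \<psi>)"
  proof (cases "derives FTop \<psi>")
    case True
    then have "derives FTop (FBox \<psi>)"
      by (meson derives.boxMono derives.boxTop derives.cut)
    then have "equiv_fm (FBox \<psi>) FTop" unfolding equiv_fm_def by (simp add: derives.top derives.bot)
    then have "f (FBox \<psi>) = top" using filt_eq[OF f] f unfolding A_filters_def by simp
    then show ?thesis by simp
  next
    case False
    note p = pid_ideal[OF False]
    have "RBox0 tens imp (\<lambda>i. i \<psi>) f \<le> imp (pid \<psi> \<psi>) (RBox tens f (pid \<psi>))"
      unfolding RBox0_def using p by (rule INF_lower)
    also have "\<dots> = RBox tens f (pid \<psi>)"
      by (simp add: pid_def derives.refl cfd_imp_top[OF c])
    also have "\<dots> \<le> f (FBox \<psi>)"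
      unfolding RBox_def
    proof (rule SUP_least)
      fix \<chi> :: "'v fm"
      show "tens (f (FBox \<chi>)) (pid \<psi> \<chi>) \<le> f (FBox \<psi>)"
        using filt_mono[OF f] derives.boxMono
        by (simp add: pid_def cfd_unit2[OF c] cfd_bot[OF c]) blast
    qed
    finally show ?thesis .
  qed
qed

lemma dia_prin:
  fixes tens imp :: "'a::complete_lattice \<Rightarrow> 'a \<Rightarrow> 'a" and \<psi> :: "'v fm"
  assumes c: "cfd_res_lattice tens imp" and i: "i \<in> A_ideals"
  shows "RDia0 tens imp (\<lambda>f. f \<psi>) i = i (FDia \<psi>)"
proof (rule order.antisym)
  show "i (FDia \<psi>) \<le> RDia0 tens imp (\<lambda>f. f \<psi>) i"
    unfolding RDia0_def
  proof (rule INF_greatest)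
    fix f :: "'v fm \<Rightarrow> 'a" assume "f \<in> A_filters"
    have "tens (f \<psi>) (i (FDia \<psi>)) \<le> RDia tens i f"
      unfolding RDia_def by (rule SUP_upper) simp
    then show "i (FDia \<psi>) \<le> imp (f \<psi>) (RDia tens i f)" using cfd_res[OF c] by simp
  qed
next
  show "RDia0 tens imp (\<lambda>f. f \<psi>) i \<le> i (FDia \<psi>)"
  proof (cases "derives \<psi> FBot")
    case True
    then have "derives (FDia \<psi>) FBot"
      by (meson derives.diaMono derives.diaBot derives.cut)
    then have "equiv_fm (FDia \<psi>) FBot" unfolding equiv_fm_def by (simp add: derives.top derives.bot)
    then have "i (FDia \<psi>) = top" using ideal_eq[OF i] i unfolding A_ideals_def by simp
    then show ?thesis by simp
  next
    case False
    note p = pfil_filter[OF False]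
    have "RDia0 tens imp (\<lambda>f. f \<psi>) i \<le> imp (pfil \<psi> \<psi>) (RDia tens i (pfil \<psi>))"
      unfolding RDia0_def using p by (rule INF_lower)
    also have "\<dots> = RDia tens i (pfil \<psi>)"
      by (simp add: pfil_def derives.refl cfd_imp_top[OF c])
    also have "\<dots> \<le> i (FDia \<psi>)"
      unfolding RDia_def
    proof (rule SUP_least)
      fix \<chi> :: "'v fm"
      show "tens (pfil \<psi> \<chi>) (i (FDia \<chi>)) \<le> i (FDia \<psi>)"
        using ideal_anti[OF i] derives.diaMono
        by (simp add: pfil_def cfd_unit[OF c] cfd_bot2[OF c]) blast
    qed
    finally show ?thesis .
  qed
qed

lemma up_cong: "(\<And>f. f \<in> A_filters \<Longrightarrow> g f = g' f) \<Longrightarrow> up tens imp g i = up tens imp g' i"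
  unfolding up_def by (rule INF_cong) auto

lemma down_cong: "(\<And>i. i \<in> A_ideals \<Longrightarrow> u i = u' i) \<Longrightarrow> down tens imp u f = down tens imp u' f"
  unfolding down_def by (rule INF_cong) auto

lemma RBox0_cong: "(\<And>i. i \<in> A_ideals \<Longrightarrow> u i = u' i) \<Longrightarrow> RBox0 tens imp u f = RBox0 tens imp u' f"
  unfolding RBox0_def by (rule INF_cong) auto

lemma RDia0_cong: "(\<And>f. f \<in> A_filters \<Longrightarrow> g f = g' f) \<Longrightarrow> RDia0 tens imp g i = RDia0 tens imp g' i"
  unfolding RDia0_def by (rule INF_cong) auto

theorem mainTheorem2:
  fixes tens imp :: "'a::complete_lattice \<Rightarrow> 'a \<Rightarrow> 'a" and \<phi> :: "'v fm"
  assumes "cfd_res_lattice tens imp"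
  shows "(\<forall>f\<in>A_filters. fst (V tens imp \<phi>) f = f \<phi>) \<and>
         (\<forall>i\<in>A_ideals. snd (V tens imp \<phi>) i = i \<phi>)"
proof (induction \<phi>)
  case FBot
  have "\<forall>f\<in>A_filters. down tens imp (\<lambda>i. top) f = f (FBot :: 'v fm)"
  proof
    fix f :: "'v fm \<Rightarrow> 'a" assume f: "f \<in> A_filters"
    have "down tens imp (\<lambda>i. top) f = down tens imp (\<lambda>i. i FBot) f"
      by (rule down_cong) (simp add: A_ideals_def)
    then show "down tens imp (\<lambda>i. top) f = f FBot" using down_prin[OF assms f] by simp
  qed
  then show ?case by (simp add: A_ideals_def)
next
  case FTop
  have "\<forall>i\<in>A_ideals. up tens imp (\<lambda>f. top) i = i (FTop :: 'v fm)"
  proof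
    fix i :: "'v fm \<Rightarrow> 'a" assume i: "i \<in> A_ideals"
    have "up tens imp (\<lambda>f. top) i = up tens imp (\<lambda>f. f FTop) i"
      by (rule up_cong) (simp add: A_filters_def)
    then show "up tens imp (\<lambda>f. top) i = i FTop" using up_prin[OF assms i] by simp
  qed
  then show ?case by (simp add: A_filters_def)
next
  case (Var x)
  then show ?case by simp
next
  case (FAnd \<phi>1 \<phi>2)
  have e: "\<forall>f\<in>A_filters. inf (fst (V tens imp \<phi>1) f) (fst (V tens imp \<phi>2) f) = f (FAnd \<phi>1 \<phi>2)"
    using FAnd.IH by (simp add: A_filters_def)
  have "\<forall>i\<in>A_ideals. up tens imp (\<lambda>f. inf (fst (V tens imp \<phi>1) f) (fst (V tens imp \<phi>2) f)) i = i (FAnd \<phi>1 \<phi>2)"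
  proof
    fix i :: "'v fm \<Rightarrow> 'a" assume i: "i \<in> A_ideals"
    have "up tens imp (\<lambda>f. inf (fst (V tens imp \<phi>1) f) (fst (V tens imp \<phi>2) f)) i
        = up tens imp (\<lambda>f. f (FAnd \<phi>1 \<phi>2)) i"
      by (rule up_cong) (use e in blast)
    then show "up tens imp (\<lambda>f. inf (fst (V tens imp \<phi>1) f) (fst (V tens imp \<phi>2) f)) i = i (FAnd \<phi>1 \<phi>2)"
      using up_prin[OF assms i] by simp
  qed
  then show ?case using e by (simp add: Let_def)
next
  case (FOr \<phi>1 \<phi>2)
  have e: "\<forall>i\<in>A_ideals. inf (snd (V tens imp \<phi>1) i) (snd (V tens imp \<phi>2) i) = i (FOr \<phi>1 \<phi>2)"
    using FOr.IH by (simp add: A_ideals_def)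
  have "\<forall>f\<in>A_filters. down tens imp (\<lambda>i. inf (snd (V tens imp \<phi>1) i) (snd (V tens imp \<phi>2) i)) f = f (FOr \<phi>1 \<phi>2)"
  proof
    fix f :: "'v fm \<Rightarrow> 'a" assume f: "f \<in> A_filters"
    have "down tens imp (\<lambda>i. inf (snd (V tens imp \<phi>1) i) (snd (V tens imp \<phi>2) i)) f
        = down tens imp (\<lambda>i. i (FOr \<phi>1 \<phi>2)) f"
      by (rule down_cong) (use e in blast)
    then show "down tens imp (\<lambda>i. inf (snd (V tens imp \<phi>1) i) (snd (V tens imp \<phi>2) i)) f = f (FOr \<phi>1 \<phi>2)"
      using down_prin[OF assms f] by simp
  qed
  then show ?case using e by (simp add: Let_def)
next
  case (FBox \<phi>)
  have e: "\<forall>f\<in>A_filters. RBox0 tens imp (snd (V tens imp \<phi>)) f = f (FBox \<phi>)"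
  proof
    fix f :: "'v fm \<Rightarrow> 'a" assume f: "f \<in> A_filters"
    have "RBox0 tens imp (snd (V tens imp \<phi>)) f = RBox0 tens imp (\<lambda>i. i \<phi>) f"
      by (rule RBox0_cong) (use FBox.IH in blast)
    then show "RBox0 tens imp (snd (V tens imp \<phi>)) f = f (FBox \<phi>)" using box_prin[OF assms f] by simp
  qed
  have "\<forall>i\<in>A_ideals. up tens imp (RBox0 tens imp (snd (V tens imp \<phi>))) i = i (FBox \<phi>)"
  proof
    fix i :: "'v fm \<Rightarrow> 'a" assume i: "i \<in> A_ideals"
    have "up tens imp (RBox0 tens imp (snd (V tens imp \<phi>))) i = up tens imp (\<lambda>f. f (FBox \<phi>)) i"
      by (rule up_cong) (use e in blast)
    then show "up tens imp (RBox0 tens imp (snd (V tens imp \<phi>))) i = i (FBox \<phi>)"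
      using up_prin[OF assms i] by simp
  qed
  then show ?case using e by (simp add: Let_def)
next
  case (FDia \<phi>)
  have e: "\<forall>i\<in>A_ideals. RDia0 tens imp (fst (V tens imp \<phi>)) i = i (FDia \<phi>)"
  proof
    fix i :: "'v fm \<Rightarrow> 'a" assume i: "i \<in> A_ideals"
    have "RDia0 tens imp (fst (V tens imp \<phi>)) i = RDia0 tens imp (\<lambda>f. f \<phi>) i"
      by (rule RDia0_cong) (use FDia.IH in blast)
    then show "RDia0 tens imp (fst (V tens imp \<phi>)) i = i (FDia \<phi>)" using dia_prin[OF assms i] by simp
  qed
  have "\<forall>f\<in>A_filters. down tens imp (RDia0 tens imp (fst (V tens imp \<phi>))) f = f (FDia \<phi>)"
  proof
    fix f :: "'v fm \<Rightarrow> 'a" assume f: "f \<in> A_filters"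
    have "down tens imp (RDia0 tens imp (fst (V tens imp \<phi>))) f = down tens imp (\<lambda>i. i (FDia \<phi>)) f"
      by (rule down_cong) (use e in blast)
    then show "down tens imp (RDia0 tens imp (fst (V tens imp \<phi>))) f = f (FDia \<phi>)"
      using down_prin[OF assms f] by simp
  qed
  then show ?case using e by (simp add: Let_def)
qed

end
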